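(* Let $a>-1$ and let $T=\begin{bmatrix} t_{11} & t_{12}\\ 0 & t_{22}\end{bmatrix}$, where $t_{12}$ is a random octonion whose eight real coefficients are independent standard Gaussians, and $t_{11}=s_1^{1/2}$, $t_{22}=s_2^{1/2}$ with $s_1,s_2$ having Gamma distributions $\Gamma[a+1,2]$ and $\Gamma[a+5,2]$ respectively, $t_{12},s_1,s_2$ independent. Let $$W=T^\dagger T=\begin{bmatrix} t_{11}^2 & t_{11}t_{12}\\ t_{11}\bar t_{12} & |t_{12}|^2+t_{22}^2\end{bmatrix},$$ and define the eigenvalues $\lambda_1,\lambda_2$ of $W$ as the two roots of $(W_{11}-\lambda)(W_{22}-\lambda)-|W_{12}|^2=0$ (equivalently, the two distinct eightfold degenerate eigenvalues of the $16\times16$ real symmetric matrix $\begin{bmatrix} W_{11}\mathbb I_8 & \omega(W_{12})\\ \omega(W_{12})^T & W_{22}\mathbb I_8\end{bmatrix}$). Then the joint probability density function of $\lambda_1,\lambda_2$ is proportional to $$(\lambda_1\lambda_2)^{a}e^{-(\lambda_1+\lambda_2)/2}(\lambda_2-\lambda_1)^8,\qquad \lambda_1,\lambda_2>0.$$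
   Context: The real octonions form the 8-dimensional real algebra with basis $1,e_1,\dots,e_7$, obtained by Cayley–Dickson doubling of the quaternions: elements are $p_1+p_2 l$ with $p_1,p_2$ quaternions, $e_1=i,e_2=j,e_3=k,e_4=l,e_5=il,e_6=jl,e_7=kl$, with multiplication $(p_1+p_2l)(q_1+q_2l)=(p_1q_1-\bar q_2p_2)+(q_2p_1+p_2\bar q_1)l$. For $x=x_0+\sum_j x_je_j$, $\bar x=x_0-\sum_j x_je_j$ and $|x|^2=x\bar x=x_0^2+\cdots+x_7^2$. $\omega(b)$ denotes the $8\times8$ real matrix of left multiplication $x\mapsto bx$ in the basis $1,e_1,\dots,e_7$. $\Gamma[\kappa,s]$ denotes the Gamma distribution with shape $\kappa$ and scale $s$, i.e. density proportional to $x^{\kappa-1}e^{-x/s}$ on $x>0$. *)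

theory Defs
  imports "HOL-Probability.Probability"
begin

definition gamma_density :: "real \<Rightarrow> real \<Rightarrow> real \<Rightarrow> real" where
  "gamma_density k s x =
     (if 0 < x then x powr (k - 1) * exp (- x / s) / (Gamma k * s powr k) else 0)"

text \<open>An octonion is represented by its 8 real coefficients w.r.t. the basis
  1, e1, ..., e7, i.e. by the coordinates x 0, ..., x 7 of a function nat => real.\<close>
type_synonym octo = "nat \<Rightarrow> real"

definition oct_normsq :: "octo \<Rightarrow> real" where
  "oct_normsq x = (\<Sum>i<8. (x i)\<^sup>2)"

definition oct_scale :: "real \<Rightarrow> octo \<Rightarrow> octo" where
  "oct_scale r x = (\<lambda>i. if i < 8 then r * x i else 0)"

definition eig_lo :: "real \<Rightarrow> real \<Rightarrow> real \<Rightarrow> real" where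
  "eig_lo w11 w22 n12 =
     ((w11 + w22) - sqrt ((w11 + w22)\<^sup>2 - 4 * (w11 * w22 - n12))) / 2"

definition eig_hi :: "real \<Rightarrow> real \<Rightarrow> real \<Rightarrow> real" where
  "eig_hi w11 w22 n12 =
     ((w11 + w22) + sqrt ((w11 + w22)\<^sup>2 - 4 * (w11 * w22 - n12))) / 2"

lemma eig_roots:
  assumes "(w11 + w22)\<^sup>2 - 4 * (w11 * w22 - n12) \<ge> 0"
  shows "(w11 - eig_lo w11 w22 n12) * (w22 - eig_lo w11 w22 n12) - n12 = 0"
    and "(w11 - eig_hi w11 w22 n12) * (w22 - eig_hi w11 w22 n12) - n12 = 0"
proof -
  define D where "D = (w11 + w22)\<^sup>2 - 4 * (w11 * w22 - n12)"
  have s: "sqrt D * sqrt D = D" using assms D_def by simp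
  show "(w11 - eig_lo w11 w22 n12) * (w22 - eig_lo w11 w22 n12) - n12 = 0"
    unfolding eig_lo_def D_def[symmetric] using s unfolding D_def
    by (simp add: field_simps power2_eq_square)
  show "(w11 - eig_hi w11 w22 n12) * (w22 - eig_hi w11 w22 n12) - n12 = 0"
    unfolding eig_hi_def D_def[symmetric] using s unfolding D_def
    by (simp add: field_simps power2_eq_square)
qed

end

theory Submission
  imports Defs
begin


lemma nn_subst_mono:
  fixes g g' :: "real \<Rightarrow> real" and l u :: "nat \<Rightarrow> real" and f :: "real \<Rightarrow> real"
  assumes S: "S = (\<Union>n. {l n..u n})" and l: "decseq l" and u: "incseq u" and lu: "\<And>n. l n \<le> u n"
  assumes deriv: "\<And>x. x \<in> S \<Longrightarrow> (g has_real_derivative g' x) (at x)"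
    and cont: "continuous_on S g'" and nonneg: "\<And>x. x \<in> S \<Longrightarrow> g' x \<ge> 0"
    and fm[measurable]: "f \<in> borel_measurable borel" and fnn: "\<And>x. f x \<ge> 0"
  shows "(\<integral>\<^sup>+x. f x * indicator (g`S) x \<partial>lborel) = (\<integral>\<^sup>+x. f (g x) * g' x * indicator S x \<partial>lborel)"
proof -
  define B where "B n = {l n..u n}" for n
  have Bsub: "B n \<subseteq> S" for n unfolding S B_def by auto
  have incB: "incseq B" unfolding B_def incseq_def using l u
    by (auto simp: decseq_def incseq_def)
  have Sm[measurable]: "S \<in> sets borel" unfolding S by measurable
  have gcont: "continuous_on S g"
    using deriv by (meson DERIV_isCont continuous_at_imp_continuous_on)
  have img: "g ` B n = {g (l n)..g (u n)}" for n
  proof -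
    have dB: "\<And>x. x \<in> {l n..u n} \<Longrightarrow> (g has_real_derivative g' x) (at x)"
      "\<And>x. x \<in> {l n..u n} \<Longrightarrow> g' x \<ge> 0"
      using deriv nonneg Bsub[of n] unfolding B_def by auto
    have mono: "\<And>x y. l n \<le> x \<Longrightarrow> x \<le> y \<Longrightarrow> y \<le> u n \<Longrightarrow> g x \<le> g y"
      by (rule deriv_nonneg_imp_mono[OF dB]) auto
    have cB: "continuous_on {l n..u n} g"
      using continuous_on_subset[OF gcont Bsub[of n]] unfolding B_def .
    show ?thesis
    proof
      show "g ` B n \<subseteq> {g (l n)..g (u n)}" unfolding B_def using mono by auto
      show "{g (l n)..g (u n)} \<subseteq> g ` B n"
      proof
        fix y assume "y \<in> {g (l n)..g (u n)}"
        then obtain x where "l n \<le> x" "x \<le> u n" "g x = y"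
          using IVT'[of g "l n" y "u n"] cB lu[of n] by auto
        then show "y \<in> g ` B n" unfolding B_def by auto
      qed
    qed
  qed
  have incC: "incseq (\<lambda>n. g ` B n)"
    using incB by (auto simp: incseq_def)
  have gS: "g ` S = (\<Union>n. g ` B n)" unfolding S B_def by auto
  define H where "H x = f (g x) * g' x * indicator S x" for x
  define gt where "gt x = indicator S x * g x" for x
  define gt' where "gt' x = indicator S x * g' x" for x
  have [measurable]: "gt \<in> borel_measurable borel" unfolding gt_def
    using borel_measurable_continuous_on_indicator[OF Sm gcont] by simp
  have [measurable]: "gt' \<in> borel_measurable borel" unfolding gt'_def
    using borel_measurable_continuous_on_indicator[OF Sm cont] by simp
  have Heq: "H = (\<lambda>x. f (gt x) * gt' x * indicator S x)"
    by (auto simp: H_def gt_def gt'_def fun_eq_iff split: split_indicator)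
  have Hm[measurable]: "H \<in> borel_measurable borel" unfolding Heq by measurable
  have gSm: "g ` S \<in> sets borel" unfolding gS img by measurable
  have "(\<integral>\<^sup>+x. f x * indicator (g`S) x \<partial>lborel) = emeasure (density lborel f) (g ` S)"
    using gSm by (subst emeasure_density) (auto simp: gS intro!: nn_integral_cong split: split_indicator)
  also have "\<dots> = (SUP n. emeasure (density lborel f) (g ` B n))"
    unfolding gS by (rule SUP_emeasure_incseq[symmetric]) (use incC in \<open>auto simp: img\<close>)
  also have "\<dots> = (SUP n. (\<integral>\<^sup>+x. f x * indicator {g (l n)..g (u n)} x \<partial>lborel))"
    by (subst emeasure_density) (auto simp: img intro!: SUP_cong nn_integral_cong split: split_indicator)
  also have "\<dots> = (SUP n. (\<integral>\<^sup>+x. f (g x) * g' x * indicator {l n..u n} x \<partial>lborel))"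
  proof (rule SUP_cong[OF refl], rule nn_integral_substitution)
    fix n
    show "\<And>x. x \<in> {l n..u n} \<Longrightarrow> (g has_real_derivative g' x) (at x)"
      "\<And>x. x \<in> {l n..u n} \<Longrightarrow> g' x \<ge> 0"
      using deriv nonneg Bsub[of n] unfolding B_def by auto
    show "continuous_on {l n..u n} g'" using continuous_on_subset[OF cont Bsub[of n]] unfolding B_def .
  qed (auto simp: lu set_borel_measurable_def)
  also have "\<dots> = (SUP n. emeasure (density lborel H) (B n))"
  proof (rule SUP_cong[OF refl])
    fix n
    have "emeasure (density lborel H) (B n) = (\<integral>\<^sup>+x. H x * indicator (B n) x \<partial>lborel)"
      by (subst emeasure_density) (auto simp: B_def intro!: nn_integral_cong split: split_indicator)
    also have "\<dots> = (\<integral>\<^sup>+x. f (g x) * g' x * indicator {l n..u n} x \<partial>lborel)"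
      using Bsub[of n] by (intro nn_integral_cong) (auto simp: H_def B_def split: split_indicator)
    finally show "(\<integral>\<^sup>+x. f (g x) * g' x * indicator {l n..u n} x \<partial>lborel) = emeasure (density lborel H) (B n)" ..
  qed
  also have "\<dots> = emeasure (density lborel H) (\<Union>n. B n)"
    using incB by (intro SUP_emeasure_incseq) (auto simp: B_def[abs_def])
  also have "\<dots> = (\<integral>\<^sup>+x. H x * indicator S x \<partial>lborel)"
    by (subst emeasure_density) (auto simp: B_def S[symmetric] intro!: nn_integral_cong split: split_indicator)
  also have "\<dots> = (\<integral>\<^sup>+x. f (g x) * g' x * indicator S x \<partial>lborel)"
    by (intro nn_integral_cong) (auto simp: H_def split: split_indicator)
  finally show ?thesis .
qed


definition gdens :: "real \<Rightarrow> real \<Rightarrow> real \<Rightarrow> real" where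
  "gdens c k x = (if 0 < x then c * x powr (k - 1) * exp (- x / 2) else 0)"

lemma gdens_nonneg: "c \<ge> 0 \<Longrightarrow> gdens c k x \<ge> 0"
  by (simp add: gdens_def)

lemma gdens_measurable[measurable]: "gdens c k \<in> borel_measurable borel"
  unfolding gdens_def[abs_def] by measurable

lemma Ioi_exhaust: "{m<..} = (\<Union>n::nat. {m + 1/(real n+1) .. m + real n + 1})"
proof
  show "(\<Union>n::nat. {m + 1/(real n+1) .. m + real n + 1}) \<subseteq> {m<..}"
    by (auto simp: add_pos_pos) (smt (verit) divide_pos_pos of_nat_0_le_iff)
  show "{m<..} \<subseteq> (\<Union>n::nat. {m + 1/(real n+1) .. m + real n + 1})"
  proof
    fix x assume "x \<in> {m<..}"
    then have d: "x - m > 0" by auto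
    obtain n :: nat where n: "max (x - m) (1/(x-m)) < real n"
      using reals_Archimedean2 by blast
    have "1/(real n + 1) \<le> x - m"
    proof -
      have "1/(x-m) < real n + 1" using n by auto
      then show ?thesis using d by (simp add: divide_le_eq field_simps)
    qed
    moreover have "x - m \<le> real n + 1" using n by auto
    ultimately show "x \<in> (\<Union>n::nat. {m + 1/(real n+1) .. m + real n + 1})"
      by (intro UN_I[of n]) auto
  qed
qed

lemma Ioi_exhaust_dec: "decseq (\<lambda>n::nat. m + 1/(real n+1))"
  by (auto simp: decseq_def intro!: divide_left_mono)

lemma Ioi_exhaust_inc: "incseq (\<lambda>n::nat. m + real n+1)"
  by (auto simp: incseq_def)

lemma Ioi_exhaust_le: "m + 1/(real n+1) \<le> m + real n+1"
proof -
  have "1/(real n+1) \<le> 1" by (simp add: divide_le_eq)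
  moreover have "0 \<le> real n" by simp
  ultimately show ?thesis by linarith
qed

lemma distributed_via_integral:
  assumes P: "prob_space M"
  assumes X: "distributed M N X f"
    and G[measurable]: "G \<in> measurable N K"
    and h[measurable]: "h \<in> borel_measurable K"
    and eq: "\<And>A. A \<in> sets K \<Longrightarrow> (\<integral>\<^sup>+x. f x * indicator A (G x) \<partial>N) = (\<integral>\<^sup>+y. h y * indicator A y \<partial>K)"
  shows "distributed M K (\<lambda>\<omega>. G (X \<omega>)) h"
proof -
  have Xm[measurable]: "X \<in> measurable M N" using distributed_measurable[OF X] .
  have fm[measurable]: "f \<in> borel_measurable N" using distributed_borel_measurable[OF X] .
  have "distr M K (\<lambda>\<omega>. G (X \<omega>)) = distr (distr M N X) K G"
    by (subst distr_distr) (auto simp: comp_def)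
  also have "\<dots> = distr (density N f) K G"
    using distributed_distr_eq_density[OF X] by simp
  also have "\<dots> = density K h"
  proof (rule measure_eqI)
    fix A assume A: "A \<in> sets (distr (density N f) K G)"
    then have A': "A \<in> sets K" by simp
    have "emeasure (distr (density N f) K G) A = emeasure (density N f) (G -` A \<inter> space N)"
      using A' by (subst emeasure_distr) auto
    also have "\<dots> = (\<integral>\<^sup>+x. f x * indicator (G -` A \<inter> space N) x \<partial>N)"
      using A' by (subst emeasure_density) auto
    also have "\<dots> = (\<integral>\<^sup>+x. f x * indicator A (G x) \<partial>N)"
      by (intro nn_integral_cong) (auto split: split_indicator)
    also have "\<dots> = emeasure (density K h) A"
      using A' by (subst emeasure_density) (auto simp: eq)
    finally show "emeasure (distr (density N f) K G) A = emeasure (density K h) A" .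
  qed simp
  finally show ?thesis unfolding distributed_def by auto
qed


lemma powr_sq_half: "x > 0 \<Longrightarrow> (x^2) powr (1/2 - 1) = 1 / (x::real)"
proof -
  assume x: "x > 0"
  have "(x^2) powr (1/2 - 1) = (x^2) powr (1/2) / (x^2) powr 1" by (rule powr_diff)
  also have "\<dots> = x / x^2" using x by (simp add: powr_half_sqrt)
  also have "\<dots> = 1 / x" using x by (simp add: power2_eq_square)
  finally show ?thesis .
qed

lemma powr_sq_half': "x > 0 \<Longrightarrow> (x^2) powr (-(1/2)) = 1 / (x::real)"
  using powr_sq_half[of x] by simp

lemma ennreal_2mult: "0 \<le> y \<Longrightarrow> ennreal (2 * y) = 2 * ennreal y"
  by (simp add: ennreal_mult)

lemma sq_normal:
  assumes P: "prob_space M" and X: "distributed M lborel X std_normal_density"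
  shows "distributed M lborel (\<lambda>\<omega>. (X \<omega>)^2) (gdens (1/sqrt(2*pi)) (1/2))"
proof -
  define c where "c = 1/sqrt(2*pi)"
  have cpos: "c > 0" unfolding c_def by simp
  have "distributed M lborel (\<lambda>\<omega>. (\<lambda>z. z^2) (X \<omega>)) (\<lambda>u. ennreal (gdens c (1/2) u))"
  proof (rule distributed_via_integral[OF P X])
    fix A assume "A \<in> sets (lborel :: real measure)"
    then have A[measurable]: "A \<in> sets borel" by simp
    define F where "F z = std_normal_density z * indicator A (z^2)" for z
    have Fm[measurable]: "F \<in> borel_measurable borel" unfolding F_def by measurable
    have Fnn: "F z \<ge> 0" for z unfolding F_def by simp
    have Fev: "F (-z) = F z" for z unfolding F_def by (simp add: std_normal_density_def)
    have "(\<integral>\<^sup>+z. ennreal (std_normal_density z) * indicator A (z^2) \<partial>lborel) = (\<integral>\<^sup>+z. ennreal (F z) \<partial>lborel)"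
      by (intro nn_integral_cong) (auto simp: F_def split: split_indicator)
    also have "\<dots> = (\<integral>\<^sup>+z. ennreal (F z * indicator {0<..} z) + ennreal (F z * indicator {..<0} z) \<partial>lborel)"
      by (intro nn_integral_cong_AE, rule AE_mp[OF AE_lborel_singleton[of 0]])
         (auto simp: Fnn split: split_indicator)
    also have "\<dots> = (\<integral>\<^sup>+z. ennreal (F z * indicator {0<..} z) \<partial>lborel) + (\<integral>\<^sup>+z. ennreal (F z * indicator {..<0} z) \<partial>lborel)"
      by (rule nn_integral_add) auto
    also have "(\<integral>\<^sup>+z. ennreal (F z * indicator {..<0} z) \<partial>lborel) = (\<integral>\<^sup>+z. ennreal (F z * indicator {0<..} z) \<partial>lborel)"
      by (subst nn_integral_real_affine[where c="-1" and t=0]) (auto simp: Fev split: split_indicator intro!: nn_integral_cong)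
    also have "X + X = 2 * X" for X :: ennreal by (simp add: mult_2)
    also have "2 * (\<integral>\<^sup>+z. ennreal (F z * indicator {0<..} z) \<partial>lborel) = (\<integral>\<^sup>+z. 2 * ennreal (F z * indicator {0<..} z) \<partial>lborel)"
      by (rule nn_integral_cmult[symmetric]) auto
    also have "\<dots> = (\<integral>\<^sup>+z. ennreal (gdens c (1/2) ((\<lambda>z. z^2) z) * indicator A ((\<lambda>z. z^2) z) * (2 * z) * indicator {0<..} z) \<partial>lborel)"
    proof (intro nn_integral_cong)
      fix z :: real
      show "2 * ennreal (F z * indicator {0<..} z) = ennreal (gdens c (1/2) ((\<lambda>z. z^2) z) * indicator A ((\<lambda>z. z^2) z) * (2 * z) * indicator {0<..} z)"
      proof (cases "z > 0")
        case True
        have "gdens c (1/2) (z^2) * (2*z) = 2 * std_normal_density z"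
          using True by (simp add: gdens_def powr_sq_half' c_def std_normal_density_def field_simps)
        then have e: "gdens c (1/2) (z^2) * indicator A (z^2) * (2*z) * indicator {0<..} z = 2 * (F z * indicator {0<..} z)"
          using True by (simp add: F_def algebra_simps)
        have "0 \<le> F z * indicator {0<..} z" using Fnn[of z] by simp
        then show ?thesis unfolding e by (rule ennreal_2mult[symmetric])
      qed simp
    qed
    also have "\<dots> = (\<integral>\<^sup>+u. ennreal (gdens c (1/2) u * indicator A u * indicator ((\<lambda>z. z^2) ` {0<..}) u) \<partial>lborel)"
      by (rule nn_subst_mono[OF Ioi_exhaust[of 0] Ioi_exhaust_dec Ioi_exhaust_inc Ioi_exhaust_le, symmetric])
         (auto intro!: derivative_eq_intros continuous_intros simp: gdens_nonneg cpos less_imp_le)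
    also have "(\<lambda>z::real. z^2) ` {0<..} = {0<..}"
    proof
      show "{0<..} \<subseteq> (\<lambda>z::real. z^2) ` {0<..}"
      proof
        fix u :: real assume "u \<in> {0<..}"
        then show "u \<in> (\<lambda>z::real. z^2) ` {0<..}" by (intro image_eqI[of _ _ "sqrt u"]) auto
      qed
    qed auto
    also have "(\<integral>\<^sup>+u. ennreal (gdens c (1/2) u * indicator A u * indicator {0<..} u) \<partial>lborel) = (\<integral>\<^sup>+u. ennreal (gdens c (1/2) u) * indicator A u \<partial>lborel)"
      by (intro nn_integral_cong) (auto simp: gdens_def split: split_indicator)
    finally show "(\<integral>\<^sup>+z. ennreal (std_normal_density z) * indicator A (z^2) \<partial>lborel) = (\<integral>\<^sup>+u. ennreal (gdens c (1/2) u) * indicator A u \<partial>lborel)" .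
  qed auto
  then show ?thesis by (simp add: c_def)
qed


lemma Beta_pos: "a > 0 \<Longrightarrow> b > 0 \<Longrightarrow> Beta a b > (0::real)"
  by (simp add: Beta_def)

lemma gdens_conv:
  assumes k1: "k1 > 0" and k2: "k2 > 0" and c1: "c1 \<ge> 0" and c2: "c2 \<ge> 0"
  shows "(\<lambda>x. \<integral>\<^sup>+y. ennreal (gdens c1 k1 (x - y)) * ennreal (gdens c2 k2 y) \<partial>lborel)
       = (\<lambda>x. ennreal (gdens (c1*c2*Beta k2 k1) (k1+k2) x))"
proof
  fix x :: real
  show "(\<integral>\<^sup>+y. ennreal (gdens c1 k1 (x - y)) * ennreal (gdens c2 k2 y) \<partial>lborel) = ennreal (gdens (c1*c2*Beta k2 k1) (k1+k2) x)"
  proof (cases "x > 0")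
    case False
    then have "\<And>y. ennreal (gdens c1 k1 (x - y)) * ennreal (gdens c2 k2 y) = 0"
      by (auto simp: gdens_def)
    then have "(\<integral>\<^sup>+y. ennreal (gdens c1 k1 (x - y)) * ennreal (gdens c2 k2 y) \<partial>lborel) = 0"
      by (simp only:) simp
    then show ?thesis using False by (simp add: gdens_def)
  next
    case x: True
    define h where "h t = indicator {0..1} t * (t powr (k2-1) * (1-t) powr (k1-1))" for t :: real
    define K where "K = c1*c2*x powr (k1-1) * x powr (k2-1) * exp(-x/2)"
    have Knn: "K \<ge> 0" unfolding K_def using c1 c2 by simp
    have hnn: "h t \<ge> 0" for t unfolding h_def by simp
    have hm[measurable]: "h \<in> borel_measurable borel" unfolding h_def by measurable
    have pw: "ennreal (gdens c1 k1 (x - y)) * ennreal (gdens c2 k2 y) = ennreal K * ennreal (h (y / x))" for y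
    proof -
      consider "y \<le> 0" | "y \<ge> x" | "0 < y \<and> y < x" by linarith
      then show ?thesis
      proof cases
        case 1
        then show ?thesis using x by (cases "y = 0") (auto simp: gdens_def h_def divide_less_0_iff not_le)
      next
        case 2
        then show ?thesis using x by (cases "y = x") (auto simp: gdens_def h_def divide_le_eq not_le)
      next
        case 3
        then have y: "0 < y" "y < x" by auto
        have e1: "(y / x) powr (k2 - 1) = y powr (k2-1) / x powr (k2-1)"
          using y by (simp add: powr_divide)
        have "1 - y / x = (x - y) / x" using x by (simp add: field_simps)
        then have e2: "(1 - y / x) powr (k1 - 1) = (x - y) powr (k1-1) / x powr (k1-1)"
          using y by (simp add: powr_divide)
        have h: "h (y / x) = y powr (k2-1) / x powr (k2-1) * ((x - y) powr (k1-1) / x powr (k1-1))"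
          unfolding h_def e1[symmetric] e2[symmetric] using y x by (simp add: indicator_def)
        have "gdens c1 k1 (x - y) * gdens c2 k2 y = K * h (y / x)"
          unfolding h K_def using y x
          by (simp add: gdens_def field_simps mult_exp_exp)
        then show ?thesis using c1 c2 hnn Knn y
          by (simp add: ennreal_mult[symmetric] gdens_def)
      qed
    qed
    have "(\<integral>\<^sup>+y. ennreal (gdens c1 k1 (x - y)) * ennreal (gdens c2 k2 y) \<partial>lborel) = (\<integral>\<^sup>+y. ennreal K * ennreal (h (y / x)) \<partial>lborel)"
      by (simp add: pw)
    also have "\<dots> = ennreal K * (\<integral>\<^sup>+y. ennreal (h (y / x)) \<partial>lborel)"
      by (rule nn_integral_cmult) auto
    also have "(\<integral>\<^sup>+y. ennreal (h (y / x)) \<partial>lborel) = ennreal x * (\<integral>\<^sup>+t. ennreal (h t) \<partial>lborel)"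
      using x by (subst nn_integral_real_affine[where c=x and t=0]) auto
    also have "(\<integral>\<^sup>+t. ennreal (h t) \<partial>lborel) = ennreal (Beta k2 k1)"
      unfolding h_def
      by (rule nn_integral_has_integral_lebesgue) (auto intro!: has_integral_Beta_real k1 k2)
    also have "ennreal K * (ennreal x * ennreal (Beta k2 k1)) = ennreal (K * x * Beta k2 k1)"
      using Knn x Beta_pos[OF k2 k1] by (simp add: ennreal_mult mult.assoc)
    also have "K * x * Beta k2 k1 = gdens (c1*c2*Beta k2 k1) (k1+k2) x"
    proof -
      have "x powr (k1-1) * x powr (k2-1) * x = x powr (k1 + k2 - 1)"
      proof -
        have "x powr (k1-1) * x powr (k2-1) * x powr 1 = x powr ((k1-1)+(k2-1)+1)"
          by (simp only: powr_add)
        moreover have "(k1-1)+(k2-1)+1 = k1 + k2 - 1" by simp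
        ultimately show ?thesis using x by simp
      qed
      then show ?thesis using x unfolding K_def gdens_def by (simp add: algebra_simps)
    qed
    finally show ?thesis .
  qed
qed

lemma (in prob_space) gdens_sum:
  fixes X :: "'i \<Rightarrow> 'a \<Rightarrow> real"
  assumes "finite I" "I \<noteq> {}"
    and "\<And>i. i \<in> I \<Longrightarrow> distributed M lborel (X i) (gdens (c i) (k i))"
    and "\<And>i. i \<in> I \<Longrightarrow> c i > 0" "\<And>i. i \<in> I \<Longrightarrow> k i > 0"
    and "indep_vars (\<lambda>_. borel) X I"
  shows "\<exists>C>0. distributed M lborel (\<lambda>\<omega>. \<Sum>i\<in>I. X i \<omega>) (gdens C (\<Sum>i\<in>I. k i))"
  using assms
proof (induct rule: finite_ne_induct)
  case (singleton i) then show ?case by auto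
next
  case (insert i I)
  then obtain C where C: "C > 0" and D: "distributed M lborel (\<lambda>\<omega>. \<Sum>i\<in>I. X i \<omega>) (gdens C (\<Sum>i\<in>I. k i))"
    by (auto intro: indep_vars_subset)
  have Kpos: "(\<Sum>i\<in>I. k i) > 0" using insert by (intro sum_pos) auto
  have ci: "c i > 0" "k i > 0" using insert by auto
  have "distributed M lborel (\<lambda>\<omega>. X i \<omega> + (\<Sum>i\<in>I. X i \<omega>))
     (\<lambda>x. \<integral>\<^sup>+y. ennreal (gdens (c i) (k i) (x - y)) * ennreal (gdens C (\<Sum>i\<in>I. k i) y) \<partial>lborel)"
    by (rule distributed_convolution[OF indep_vars_sum _ D]) (use insert in auto)
  also have "(\<lambda>x. \<integral>\<^sup>+y. ennreal (gdens (c i) (k i) (x - y)) * ennreal (gdens C (\<Sum>i\<in>I. k i) y) \<partial>lborel)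
    = (\<lambda>x. ennreal (gdens (c i * C * Beta (\<Sum>i\<in>I. k i) (k i)) (k i + (\<Sum>i\<in>I. k i)) x))"
    by (rule gdens_conv) (use ci C Kpos in auto)
  finally show ?case
    using insert C Kpos ci Beta_pos[OF Kpos, of "k i"]
    by (intro exI[of _ "c i * C * Beta (\<Sum>i\<in>I. k i) (k i)"]) auto
qed


lemma beta_int:
  fixes l1 l2 :: real
  assumes l: "0 < l1" "l1 < l2"
  shows "(\<integral>\<^sup>+x. ennreal (indicator {l1..l2} x * ((x - l1) ^ 3 * (l2 - x) ^ 3 / x ^ 8)) \<partial>lborel)
        = ennreal ((l2 - l1) ^ 7 / (140 * (l1*l2) ^ 4))"
proof -
  define d where "d = 1/l1 - 1/l2"
  define G where "G v = (d ^ 3) * (v ^ 4) / 4 - 3 * (d ^ 2) * (v ^ 5) / 5 + d * (v ^ 6) / 2 - (v ^ 7) / 7" for v :: real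
  define F where "F x = - ((l1*l2) ^ 3) * G (1/x - 1/l2)" for x :: real
  have G': "(G has_real_derivative ((d - v) ^ 3 * v ^ 3)) (at v)" for v
    unfolding G_def by (auto intro!: derivative_eq_intros simp: algebra_simps power2_eq_square power3_eq_cube numeral_eq_Suc)
  have F': "(F has_real_derivative ((x - l1) ^ 3 * (l2 - x) ^ 3 / x ^ 8)) (at x)" if x: "x > 0" for x
  proof -
    have inv: "((\<lambda>x. 1/x - 1/l2) has_real_derivative (- 1 / x ^ 2)) (at x)"
      using x by (auto intro!: derivative_eq_intros simp: power2_eq_square)
    have "(F has_real_derivative (- ((l1*l2) ^ 3) * (((d - (1/x - 1/l2)) ^ 3 * (1/x - 1/l2) ^ 3) * (- 1 / x ^ 2)))) (at x)"
      unfolding F_def[abs_def]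
      by (intro DERIV_cmult DERIV_chain2[OF G' inv])
    moreover have "- ((l1*l2) ^ 3) * (((d - (1/x - 1/l2)) ^ 3 * (1/x - 1/l2) ^ 3) * (- 1 / x ^ 2)) = (x - l1) ^ 3 * (l2 - x) ^ 3 / x ^ 8"
    proof -
      have e1: "d - (1/x - 1/l2) = (x - l1) / (l1 * x)" using l x unfolding d_def by (simp add: field_simps)
      have e2: "1/x - 1/l2 = (l2 - x) / (l2 * x)" using l x by (simp add: field_simps)
      show ?thesis unfolding e1 unfolding e2 using l x by (simp add: field_simps power_mult_distrib power_divide)
    qed
    ultimately show ?thesis by simp
  qed
  have Fl2: "F l2 = 0" unfolding F_def G_def by simp
  have Fl1: "F l1 = - ((l1*l2) ^ 3) * (d ^ 7 / 140)" unfolding F_def G_def d_def[symmetric]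
    by (simp add: field_simps power_def)
  have "((\<lambda>x. (x - l1) ^ 3 * (l2 - x) ^ 3 / x ^ 8) has_integral (F l2 - F l1)) {l1..l2}"
    using l by (intro fundamental_theorem_of_calculus)
      (auto intro!: has_field_derivative_imp_has_derivative has_real_derivative_iff_has_vector_derivative[THEN iffD1] DERIV_subset[OF F'])
  then have "(\<integral>\<^sup>+x. ennreal (indicator {l1..l2} x * ((x - l1) ^ 3 * (l2 - x) ^ 3 / x ^ 8)) \<partial>lborel) = ennreal (F l2 - F l1)"
    using l by (intro nn_integral_has_integral_lebesgue) auto
  also have "F l2 - F l1 = (l2 - l1) ^ 7 / (140 * (l1*l2) ^ 4)"
    unfolding Fl1 Fl2 d_def using l by (simp add: field_simps power_mult_distrib)
  finally show ?thesis .
qed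


lemma G_at_R:
  fixes x y t :: real
  assumes x: "x > 0" and y: "y > 0" and t: "t > max x y"
  defines "r \<equiv> t + x*y/t - x - y"
  shows "eig_lo ((sqrt x)^2) (r + (sqrt y)^2) ((sqrt x)^2 * r) = x*y/t"
    and "eig_hi ((sqrt x)^2) (r + (sqrt y)^2) ((sqrt x)^2 * r) = t"
proof -
  have tp: "t > 0" using t x by auto
  have sx: "(sqrt x)^2 = x" and sy: "(sqrt y)^2 = y" using x y by auto
  have D: "(x + (r + y))^2 - 4 * (x * (r + y) - x * r) = (t - x*y/t)^2"
    unfolding r_def using tp by (simp add: field_simps power2_eq_square)
  have "x*y < t*t" using t x y by (intro mult_strict_mono) auto
  then have pos: "t - x*y/t > 0" using tp by (simp add: field_simps)
  have sq: "sqrt ((x + (r + y))^2 - 4 * (x * (r + y) - x * r)) = t - x*y/t"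
    unfolding D using pos by simp
  have sum: "x + (r + y) = t + x*y/t" unfolding r_def by simp
  show "eig_lo ((sqrt x)^2) (r + (sqrt y)^2) ((sqrt x)^2 * r) = x*y/t"
    unfolding sx sy eig_lo_def sq unfolding sum using tp by (simp add: field_simps)
  show "eig_hi ((sqrt x)^2) (r + (sqrt y)^2) ((sqrt x)^2 * r) = t"
    unfolding sx sy eig_hi_def sq unfolding sum using tp by (simp add: field_simps)
qed

lemma R_image:
  fixes x y :: real
  assumes x: "x > 0" and y: "y > 0"
  shows "(\<lambda>t. t + x*y/t - x - y) ` {max x y<..} = {0<..}"
proof
  show "(\<lambda>t. t + x*y/t - x - y) ` {max x y<..} \<subseteq> {0<..}"
  proof
    fix r assume "r \<in> (\<lambda>t. t + x*y/t - x - y) ` {max x y<..}"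
    then obtain t where t: "t > max x y" and r: "r = t + x*y/t - x - y" by auto
    have tp: "t > 0" using t x by auto
    have "t + x*y/t - x - y = (t - x) * (t - y) / t" using tp by (simp add: field_simps)
    moreover have "(t - x) * (t - y) / t > 0" using t tp by (intro divide_pos_pos mult_pos_pos) auto
    ultimately show "r \<in> {0<..}" using r by simp
  qed
  show "{0<..} \<subseteq> (\<lambda>t. t + x*y/t - x - y) ` {max x y<..}"
  proof
    fix r :: real assume "r \<in> {0<..}"
    then have r: "r > 0" by simp
    define D where "D = (x + (y + r))^2 - 4 * (x * (y + r) - x * r)"
    define t where "t = eig_hi x (y + r) (x * r)"
    have "D = (x - y)^2 + r * (2*x + 2*y + r)" unfolding D_def by (simp add: algebra_simps power2_eq_square)
    moreover have "r * (2*x + 2*y + r) \<ge> 0" using x y r by simp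
    ultimately have Dnn: "D \<ge> 0" by simp
    have tdef: "t = ((x + (y + r)) + sqrt D) / 2" unfolding t_def eig_hi_def D_def ..
    have root: "(x - t) * ((y + r) - t) - x * r = 0"
      using eig_roots(2)[of x "y + r" "x * r"] Dnn unfolding D_def t_def by simp
    have "(x - y - r)^2 < D" unfolding D_def using x r by (simp add: algebra_simps power2_eq_square)
    then have "x - y - r < sqrt D" by (intro real_less_rsqrt)
    then have tx: "t > x" unfolding tdef by simp
    have "(y - x - r)^2 < D" unfolding D_def using y r by (simp add: algebra_simps power2_eq_square)
    then have "y - x - r < sqrt D" by (intro real_less_rsqrt)
    then have ty: "t > y" unfolding tdef by simp
    have tp: "t > 0" using tx x by simp
    have "t + x*y/t - x - y = r"
    proof -
      have e: "t * t - (x + y) * t + x * y = r * t" using root by (simp add: algebra_simps)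
      have "t + x*y/t - x - y = (t * t - (x + y) * t + x * y) / t" using tp by (simp add: field_simps)
      also have "\<dots> = r" unfolding e using tp by simp
      finally show ?thesis .
    qed
    then show "r \<in> (\<lambda>t. t + x*y/t - x - y) ` {max x y<..}"
      using tx ty by (intro image_eqI[of _ _ t]) auto
  qed
qed


lemma inner_subst:
  fixes x y c3 :: real and A :: "(real \<times> real) set"
  assumes x: "x > 0" and y: "y > 0" and c3: "c3 \<ge> 0" and A[measurable]: "A \<in> sets (borel \<Otimes>\<^sub>M borel)"
  shows "(\<integral>\<^sup>+r. ennreal (gdens c3 4 r * indicator A (eig_lo ((sqrt x)^2) (r + (sqrt y)^2) ((sqrt x)^2 * r), eig_hi ((sqrt x)^2) (r + (sqrt y)^2) ((sqrt x)^2 * r))) \<partial>lborel)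
    = (\<integral>\<^sup>+t. ennreal (gdens c3 4 (t + x*y/t - x - y) * indicator A (x*y/t, t) * (1 - x*y/t^2) * indicator {max x y<..} t) \<partial>lborel)"
proof -
  define f where "f r = gdens c3 4 r * indicator A (eig_lo ((sqrt x)^2) (r + (sqrt y)^2) ((sqrt x)^2 * r), eig_hi ((sqrt x)^2) (r + (sqrt y)^2) ((sqrt x)^2 * r))" for r
  define R where "R t = t + x*y/t - x - y" for t
  have fm[measurable]: "f \<in> borel_measurable borel" unfolding f_def eig_lo_def eig_hi_def by measurable
  have fnn: "f r \<ge> 0" for r unfolding f_def using c3 by (simp add: gdens_nonneg)
  have "(\<integral>\<^sup>+r. ennreal (f r) \<partial>lborel) = (\<integral>\<^sup>+r. ennreal (f r * indicator (R ` {max x y<..}) r) \<partial>lborel)"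
    unfolding R_def R_image[OF x y] by (intro nn_integral_cong) (auto simp: f_def gdens_def split: split_indicator)
  also have "\<dots> = (\<integral>\<^sup>+t. ennreal (f (R t) * (1 - x*y/t^2) * indicator {max x y<..} t) \<partial>lborel)"
  proof (rule nn_subst_mono[OF Ioi_exhaust[of "max x y"] Ioi_exhaust_dec Ioi_exhaust_inc Ioi_exhaust_le _ _ _ fm fnn])
    fix t assume t: "t \<in> {max x y<..}"
    then have tp: "t \<noteq> 0" using x by auto
    show "(R has_real_derivative (1 - x*y/t^2)) (at t)"
      unfolding R_def using tp by (auto intro!: derivative_eq_intros simp: power2_eq_square field_simps)
    have "x * y \<le> t^2" using t x y unfolding power2_eq_square by (intro mult_mono) auto
    then show "0 \<le> 1 - x*y/t^2" using tp by (simp add: field_simps)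
  next
    show "continuous_on {max x y<..} (\<lambda>t. 1 - x * y / t\<^sup>2)"
      using x by (intro continuous_intros) auto
  qed
  also have "\<dots> = (\<integral>\<^sup>+t. ennreal (gdens c3 4 (t + x*y/t - x - y) * indicator A (x*y/t, t) * (1 - x*y/t^2) * indicator {max x y<..} t) \<partial>lborel)"
  proof (intro nn_integral_cong)
    fix t :: real
    show "ennreal (f (R t) * (1 - x*y/t^2) * indicator {max x y<..} t) = ennreal (gdens c3 4 (t + x*y/t - x - y) * indicator A (x*y/t, t) * (1 - x*y/t^2) * indicator {max x y<..} t)"
    proof (cases "t > max x y")
      case True
      show ?thesis unfolding f_def R_def using G_at_R[OF x y True] True by simp
    qed simp
  qed
  finally show ?thesis unfolding f_def .
qed


lemma alg_t1: "x > 0 \<Longrightarrow> t > 0 \<Longrightarrow> Q > 0 \<Longrightarrow> (t/x) * Q * (P / (Q * x^4)) * ((t - x) * (x - l) / x)^3 * E * C' * \<phi> * (1 - l/t) = \<phi> * (C' * P * (t - l) * E) * ((x - l)^3 * (t - x)^3 / (x::real)^8)"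
proof -
  assume x: "x > 0" and t: "t > 0" and Q: "Q > 0"
  have h1: "(t/x) * (1 - l/t) = (t-l)/x" using x t by (simp add: field_simps)
  have h2: "Q * (P/(Q*x^4)) = P/x^4" using Q by simp
  have h3: "((t - x) * (x - l) / x)^3 = (x-l)^3*(t-x)^3/x^3" by (simp add: power_divide power_mult_distrib mult.commute)
  have "(t/x) * Q * (P / (Q * x^4)) * ((t - x) * (x - l) / x)^3 * E * C' * \<phi> * (1 - l/t)
     = ((t/x) * (1 - l/t)) * (Q * (P / (Q * x^4))) * ((t - x) * (x - l) / x)^3 * E * C' * \<phi>" by (simp only: mult_ac)
  also have "\<dots> = ((t-l)/x) * (P/x^4) * ((x-l)^3*(t-x)^3/x^3) * E * C' * \<phi>" unfolding h1 h2 h3 ..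
  also have "\<dots> = \<phi> * (C' * P * (t - l) * E) * ((x - l)^3 * (t - x)^3 / x^8)"
    using x by (simp add: field_simps) (simp add: eval_nat_numeral)
  finally show ?thesis .
qed

lemma pw_id:
  fixes a c3 x t l :: real and A :: "(real \<times> real) set"
  assumes a: "a > -1" and x: "x > 0" and t: "t > x"
  defines "y \<equiv> t/x*l"
  defines "C' \<equiv> c3 / (Gamma (a+1) * 2 powr (a+1) * (Gamma (a+5) * 2 powr (a+5)))"
  shows "(t/x) * (gamma_density (a+1) 2 x * gamma_density (a+5) 2 y * (gdens c3 4 (t + x*y/t - x - y) * indicator A (x*y/t, t) * (1 - x*y/t^2) * indicator {max x y<..} t))
   = indicator A (l,t) * (C' * (l*t) powr (a+4) * (t - l) * exp (-(t+l)/2)) * indicator {0<..} l * indicator {l<..} t * (indicator {l..t} x * ((x - l)^3 * (t - x)^3 / x^8))"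
proof -
  have tp: "t > 0" using x t by simp
  have xy: "x*y/t = l" unfolding y_def using x tp by simp
  consider "l \<le> 0" | "l \<ge> x" | "0 < l \<and> l < x" by linarith
  then show ?thesis
  proof cases
    case 1
    then have "y \<le> 0" unfolding y_def using x tp 1 by (simp add: divide_nonpos_pos mult_nonneg_nonpos)
    then show ?thesis using 1 by (simp add: gamma_density_def)
  next
    case 2
    then have "y \<ge> t" unfolding y_def using x tp by (simp add: field_simps)
    then have "indicator {max x y<..} t = (0::real)" by simp
    moreover have "indicator {l..t} x * ((x - l)^3 * (t - x)^3 / x^8) = (0::real)"
      using 2 by (cases "l = x") auto
    ultimately show ?thesis by simp
  next
    case 3
    then have l: "0 < l" "l < x" by auto
    have yp: "y > 0" "y < t" unfolding y_def using x tp l by (simp_all add: field_simps)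
    define R where "R = t + l - x - y"
    have Rf: "R = (t - x) * (x - l) / x" unfolding R_def y_def using x by (simp add: field_simps)
    have Rp: "R > 0" unfolding Rf using x t l by simp
    have e1: "exp (-x/2) * exp (-y/2) * exp (-R/2) = exp (-(t+l)/2)"
      unfolding mult_exp_exp R_def by (simp add: field_simps)
    have e2: "y powr (a+4) = (l*t) powr (a+4) / x powr (a+4)"
      unfolding y_def using x tp l by (simp add: powr_divide field_simps)
    have e3: "x powr (a+4) = x powr a * x^4"
      using x by (simp add: powr_add powr_numeral)
    have e4: "R powr (4 - 1) = R^3"
      using Rp by (simp add: powr_numeral)
    have ind: "indicator {max x y<..} t = (1::real)" "indicator {0<..} l = (1::real)" "indicator {l<..} t = (1::real)"
      "indicator {l..t} x = (1::real)"
      using yp l t by auto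
    have LHS: "(t/x) * (gamma_density (a+1) 2 x * gamma_density (a+5) 2 y * (gdens c3 4 (t + x*y/t - x - y) * indicator A (x*y/t, t) * (1 - x*y/t^2) * indicator {max x y<..} t))
      = (t/x) * ((x powr a * exp (-x/2) / (Gamma (a+1) * 2 powr (a+1))) * (y powr (a+4) * exp (-y/2) / (Gamma (a+5) * 2 powr (a+5))) * (c3 * R^3 * exp (-R/2) * indicator A (l, t) * (1 - l/t)))"
    proof -
      have g1: "gamma_density (a+1) 2 x = x powr a * exp (-x/2) / (Gamma (a+1) * 2 powr (a+1))"
        using x by (simp add: gamma_density_def)
      have g2: "gamma_density (a+5) 2 y = y powr (a+4) * exp (-y/2) / (Gamma (a+5) * 2 powr (a+5))"
        using yp by (simp add: gamma_density_def add.commute)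
      have g3: "gdens c3 4 (t + l - x - y) = c3 * R^3 * exp (-R/2)"
        using Rp e4 unfolding R_def[symmetric] by (simp add: gdens_def)
      have xy2: "x*y/t^2 = l/t" unfolding y_def using x tp by (simp add: power2_eq_square)
      show ?thesis unfolding xy2 xy g1 g2 g3 ind by simp
    qed
    also have "\<dots> = indicator A (l,t) * (C' * (l*t) powr (a+4) * (t - l) * exp (-(t+l)/2)) * ((x - l)^3 * (t - x)^3 / x^8)"
    proof -
      have "(t/x) * ((x powr a * exp (-x/2) / (Gamma (a+1) * 2 powr (a+1))) * (y powr (a+4) * exp (-y/2) / (Gamma (a+5) * 2 powr (a+5))) * (c3 * R^3 * exp (-R/2) * indicator A (l, t) * (1 - l/t)))
        = (t/x) * x powr a * y powr (a+4) * R^3 * (exp (-x/2) * exp (-y/2) * exp (-R/2)) * c3 / (Gamma (a+1) * 2 powr (a+1) * (Gamma (a+5) * 2 powr (a+5))) * indicator A (l, t) * (1 - l/t)"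
        by (simp add: field_simps)
      also have "\<dots> = (t/x) * x powr a * ((l*t) powr (a+4) / (x powr a * x^4)) * ((t - x) * (x - l) / x)^3 * exp (-(t+l)/2) * C' * indicator A (l, t) * (1 - l/t)"
        unfolding e1 unfolding e2 e3 unfolding Rf C'_def by simp
      also have "\<dots> = indicator A (l,t) * (C' * (l*t) powr (a+4) * (t - l) * exp (-(t+l)/2)) * ((x - l)^3 * (t - x)^3 / x^8)"
        using x tp by (intro alg_t1) auto
      finally show ?thesis .
    qed
    finally show ?thesis unfolding ind by simp
  qed
qed


lemma gamma_density_measurable[measurable]: "gamma_density k s \<in> borel_measurable borel"
  unfolding gamma_density_def[abs_def] by measurable

lemma gamma_density_nonneg: "k > 0 \<Longrightarrow> s > 0 \<Longrightarrow> gamma_density k s x \<ge> 0"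
  by (simp add: gamma_density_def)

lemma pred_in_Ioi[measurable (raw)]:
  fixes f g :: "'a \<Rightarrow> real"
  assumes [measurable]: "f \<in> borel_measurable M" "g \<in> borel_measurable M"
  shows "Measurable.pred M (\<lambda>x. g x \<in> {f x<..})"
  by (simp add: greaterThan_iff) measurable

lemma pred_in_Icc[measurable (raw)]:
  fixes f g h :: "'a \<Rightarrow> real"
  assumes [measurable]: "f \<in> borel_measurable M" "g \<in> borel_measurable M" "h \<in> borel_measurable M"
  shows "Measurable.pred M (\<lambda>x. g x \<in> {f x..h x})"
  by (simp add: atLeastAtMost_iff) measurable

lemma pred_in_Ioo[measurable (raw)]:
  fixes f g h :: "'a \<Rightarrow> real"
  assumes [measurable]: "f \<in> borel_measurable M" "g \<in> borel_measurable M" "h \<in> borel_measurable M"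
  shows "Measurable.pred M (\<lambda>x. g x \<in> {f x<..<h x})"
  by (simp add: greaterThanLessThan_iff) measurable

lemma nn_cmult:
  fixes g :: "real \<Rightarrow> real"
  assumes "K \<ge> 0" "g \<in> borel_measurable borel"
  shows "(\<integral>\<^sup>+r. ennreal (K * g r) \<partial>lborel) = ennreal K * (\<integral>\<^sup>+r. ennreal (g r) \<partial>lborel)"
  using assms by (simp add: ennreal_mult' nn_integral_cmult)

lemma alg2:
  fixes p \<phi> C' P d E :: real
  assumes "p > 0"
  shows "\<phi> * (C' * (P * p^4) * d * E) * (d^7 / (140 * p^4)) = (C'/140 * P * E * d^8) * \<phi>"
proof -
  have "d * d^7 = d^8" by (simp add: eval_nat_numeral)
  then show ?thesis using assms by (simp add: field_simps)
qed

lemma main_integral: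
  fixes a c3 :: real and A :: "(real \<times> real) set"
  assumes a: "a > -1" and c3: "c3 > 0" and A[measurable]: "A \<in> sets (borel \<Otimes>\<^sub>M borel)"
  defines "C \<equiv> c3 / (Gamma (a+1) * 2 powr (a+1) * (Gamma (a+5) * 2 powr (a+5)) * 140)"
  shows "(\<integral>\<^sup>+x. \<integral>\<^sup>+y. \<integral>\<^sup>+r. ennreal (gamma_density (a+1) 2 x * gamma_density (a+5) 2 y * (gdens c3 4 r *
            indicator A (eig_lo ((sqrt x)^2) (r + (sqrt y)^2) ((sqrt x)^2 * r), eig_hi ((sqrt x)^2) (r + (sqrt y)^2) ((sqrt x)^2 * r))))
            \<partial>lborel \<partial>lborel \<partial>lborel)
     = (\<integral>\<^sup>+l. \<integral>\<^sup>+t. ennreal ((if 0 < l \<and> l < t then C * (l*t) powr a * exp (-(l+t)/2) * (t-l)^8 else 0) * indicator A (l,t)) \<partial>lborel \<partial>lborel)"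
proof -
  define f1 where "f1 = gamma_density (a+1) 2"
  define f2 where "f2 = gamma_density (a+5) 2"
  have f1m[measurable]: "f1 \<in> borel_measurable borel" unfolding f1_def by measurable
  have f2m[measurable]: "f2 \<in> borel_measurable borel" unfolding f2_def by measurable
  have f1nn: "f1 x \<ge> 0" for x unfolding f1_def using a by (intro gamma_density_nonneg) auto
  have f2nn: "f2 x \<ge> 0" for x unfolding f2_def using a by (intro gamma_density_nonneg) auto
  define F1 where "F1 x y t = f1 x * f2 y * (gdens c3 4 (t + x*y/t - x - y) * indicator A (x*y/t, t) * (1 - x*y/t^2) * indicator {max x y<..} t)" for x y t :: real
  define C' where "C' = c3 / (Gamma (a+1) * 2 powr (a+1) * (Gamma (a+5) * 2 powr (a+5)))"
  define K where "K l t = C' * (l*t) powr (a+4) * (t - l) * exp (-(t+l)/2)" for l t :: real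
  define F where "F l t x = indicator A (l,t) * K l t * indicator {0<..} l * indicator {l<..} t * (indicator {l..t} x * ((x - l)^3 * (t - x)^3 / x^8))" for l t x :: real
  have step1: "(\<integral>\<^sup>+x. \<integral>\<^sup>+y. \<integral>\<^sup>+r. ennreal (f1 x * f2 y * (gdens c3 4 r *
            indicator A (eig_lo ((sqrt x)^2) (r + (sqrt y)^2) ((sqrt x)^2 * r), eig_hi ((sqrt x)^2) (r + (sqrt y)^2) ((sqrt x)^2 * r))))
            \<partial>lborel \<partial>lborel \<partial>lborel) = (\<integral>\<^sup>+x. \<integral>\<^sup>+y. \<integral>\<^sup>+t. ennreal (F1 x y t) \<partial>lborel \<partial>lborel \<partial>lborel)"
  proof (rule nn_integral_cong, rule nn_integral_cong)
    fix x y :: real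
    show "(\<integral>\<^sup>+r. ennreal (f1 x * f2 y * (gdens c3 4 r *
            indicator A (eig_lo ((sqrt x)^2) (r + (sqrt y)^2) ((sqrt x)^2 * r), eig_hi ((sqrt x)^2) (r + (sqrt y)^2) ((sqrt x)^2 * r)))) \<partial>lborel)
        = (\<integral>\<^sup>+t. ennreal (F1 x y t) \<partial>lborel)"
    proof (cases "x > 0 \<and> y > 0")
      case True
      have "(\<integral>\<^sup>+r. ennreal (f1 x * f2 y * (gdens c3 4 r *
            indicator A (eig_lo ((sqrt x)^2) (r + (sqrt y)^2) ((sqrt x)^2 * r), eig_hi ((sqrt x)^2) (r + (sqrt y)^2) ((sqrt x)^2 * r)))) \<partial>lborel)
        = ennreal (f1 x * f2 y) * (\<integral>\<^sup>+r. ennreal (gdens c3 4 r *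
            indicator A (eig_lo ((sqrt x)^2) (r + (sqrt y)^2) ((sqrt x)^2 * r), eig_hi ((sqrt x)^2) (r + (sqrt y)^2) ((sqrt x)^2 * r))) \<partial>lborel)"
        by (rule nn_cmult) (auto simp: f1nn f2nn eig_lo_def eig_hi_def)
      also have "\<dots> = ennreal (f1 x * f2 y) * (\<integral>\<^sup>+t. ennreal (gdens c3 4 (t + x*y/t - x - y) * indicator A (x*y/t, t) * (1 - x*y/t^2) * indicator {max x y<..} t) \<partial>lborel)"
        using True c3 by (subst inner_subst) auto
      also have "\<dots> = (\<integral>\<^sup>+t. ennreal (F1 x y t) \<partial>lborel)"
        unfolding F1_def by (rule nn_cmult[symmetric]) (auto simp: f1nn f2nn)
      finally show ?thesis .
    next
      case False
      then have "f1 x * f2 y = 0" by (auto simp: f1_def f2_def gamma_density_def)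
      then show ?thesis unfolding F1_def by (simp only: mult_zero_left ennreal_0)
    qed
  qed
  have step2: "(\<integral>\<^sup>+x. \<integral>\<^sup>+y. \<integral>\<^sup>+t. ennreal (F1 x y t) \<partial>lborel \<partial>lborel \<partial>lborel) = (\<integral>\<^sup>+x. \<integral>\<^sup>+t. \<integral>\<^sup>+y. ennreal (F1 x y t) \<partial>lborel \<partial>lborel \<partial>lborel)"
    by (rule nn_integral_cong, rule lborel_pair.Fubini'[symmetric]) (unfold F1_def, measurable)
  have step3: "(\<integral>\<^sup>+x. \<integral>\<^sup>+t. \<integral>\<^sup>+y. ennreal (F1 x y t) \<partial>lborel \<partial>lborel \<partial>lborel) = (\<integral>\<^sup>+x. \<integral>\<^sup>+t. \<integral>\<^sup>+l. ennreal (F l t x) \<partial>lborel \<partial>lborel \<partial>lborel)"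
  proof (rule nn_integral_cong, rule nn_integral_cong)
    fix x t :: real
    show "(\<integral>\<^sup>+y. ennreal (F1 x y t) \<partial>lborel) = (\<integral>\<^sup>+l. ennreal (F l t x) \<partial>lborel)"
    proof (cases "x > 0 \<and> t > x")
      case True
      then have x: "x > 0" and t: "t > x" by auto
      have ne: "t/x \<noteq> 0" using x t by simp
      have m: "(\<lambda>y. ennreal (F1 x y t)) \<in> borel_measurable borel" unfolding F1_def by measurable
      have "(\<integral>\<^sup>+y. ennreal (F1 x y t) \<partial>lborel) = ennreal (t/x) * (\<integral>\<^sup>+l. ennreal (F1 x (t/x*l) t) \<partial>lborel)"
        using x t by (subst nn_integral_real_affine[where t=0, OF m ne]) simp
      also have "\<dots> = (\<integral>\<^sup>+l. ennreal (t/x * F1 x (t/x*l) t) \<partial>lborel)"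
        by (rule nn_cmult[symmetric]) (use x t in \<open>auto simp: F1_def\<close>)
      also have "\<dots> = (\<integral>\<^sup>+l. ennreal (F l t x) \<partial>lborel)"
      proof (rule nn_integral_cong)
        fix l :: real
        have "t/x * F1 x (t/x*l) t = F l t x"
          unfolding F1_def f1_def f2_def F_def K_def C'_def by (rule pw_id[OF a x t])
        then show "ennreal (t/x * F1 x (t/x*l) t) = ennreal (F l t x)" by simp
      qed
      finally show ?thesis .
    next
      case False
      have "F1 x y t = 0" for y using False by (auto simp: F1_def f1_def gamma_density_def)
      moreover have "F l t x = 0" for l using False by (auto simp: F_def split: split_indicator)
      ultimately show ?thesis by simp
    qed
  qed
  have step4: "(\<integral>\<^sup>+x. \<integral>\<^sup>+t. \<integral>\<^sup>+l. ennreal (F l t x) \<partial>lborel \<partial>lborel \<partial>lborel) = (\<integral>\<^sup>+l. \<integral>\<^sup>+t. \<integral>\<^sup>+x. ennreal (F l t x) \<partial>lborel \<partial>lborel \<partial>lborel)"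
  proof -
    have "(\<integral>\<^sup>+x. \<integral>\<^sup>+t. \<integral>\<^sup>+l. ennreal (F l t x) \<partial>lborel \<partial>lborel \<partial>lborel) = (\<integral>\<^sup>+x. \<integral>\<^sup>+l. \<integral>\<^sup>+t. ennreal (F l t x) \<partial>lborel \<partial>lborel \<partial>lborel)"
      by (rule nn_integral_cong, rule lborel_pair.Fubini') (unfold F_def K_def, measurable)
    also have "\<dots> = (\<integral>\<^sup>+l. \<integral>\<^sup>+x. \<integral>\<^sup>+t. ennreal (F l t x) \<partial>lborel \<partial>lborel \<partial>lborel)"
      by (rule lborel_pair.Fubini') (unfold F_def K_def, measurable)
    also have "\<dots> = (\<integral>\<^sup>+l. \<integral>\<^sup>+t. \<integral>\<^sup>+x. ennreal (F l t x) \<partial>lborel \<partial>lborel \<partial>lborel)"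
      by (rule nn_integral_cong, rule lborel_pair.Fubini') (unfold F_def K_def, measurable)
    finally show ?thesis .
  qed
  have C'nn: "C' > 0" unfolding C'_def using c3 a by (intro divide_pos_pos mult_pos_pos) auto
  have step5: "(\<integral>\<^sup>+l. \<integral>\<^sup>+t. \<integral>\<^sup>+x. ennreal (F l t x) \<partial>lborel \<partial>lborel \<partial>lborel)
     = (\<integral>\<^sup>+l. \<integral>\<^sup>+t. ennreal ((if 0 < l \<and> l < t then C * (l*t) powr a * exp (-(l+t)/2) * (t-l)^8 else 0) * indicator A (l,t)) \<partial>lborel \<partial>lborel)"
  proof (rule nn_integral_cong, rule nn_integral_cong)
    fix l t :: real
    show "(\<integral>\<^sup>+x. ennreal (F l t x) \<partial>lborel) = ennreal ((if 0 < l \<and> l < t then C * (l*t) powr a * exp (-(l+t)/2) * (t-l)^8 else 0) * indicator A (l,t))"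
    proof (cases "0 < l \<and> l < t")
      case True
      then have l: "0 < l" "l < t" by auto
      have Knn: "K l t \<ge> 0" unfolding K_def using C'nn l by simp
      have "(\<integral>\<^sup>+x. ennreal (F l t x) \<partial>lborel) = ennreal (indicator A (l,t) * K l t) * (\<integral>\<^sup>+x. ennreal (indicator {l..t} x * ((x - l)^3 * (t - x)^3 / x^8)) \<partial>lborel)"
        unfolding F_def using l Knn by (subst nn_cmult[symmetric]) (auto intro!: nn_integral_cong)
      also have "\<dots> = ennreal (indicator A (l,t) * K l t) * ennreal ((t - l)^7 / (140 * (l*t)^4))"
        using l by (simp only: beta_int)
      also have "\<dots> = ennreal (indicator A (l,t) * K l t * ((t - l)^7 / (140 * (l*t)^4)))"
        by (rule ennreal_mult'[symmetric]) (use Knn in simp)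
      also have "indicator A (l,t) * K l t * ((t - l)^7 / (140 * (l*t)^4)) = (C * (l*t) powr a * exp (-(l+t)/2) * (t-l)^8) * indicator A (l,t)"
      proof -
        have lt: "l * t > 0" using l by simp
        have pw: "(l*t) powr (a+4) = (l*t) powr a * (l*t)^4" using lt by (simp add: powr_add powr_numeral)
        have CC: "C = C'/140" unfolding C_def C'_def by simp
        have ee: "exp (-(t+l)/2) = exp (-(l+t)/2)" by (simp add: add.commute)
        show ?thesis unfolding K_def pw CC ee by (rule alg2[OF lt])
      qed
      finally show ?thesis using True by simp
    next
      case False
      then have "F l t x = 0" for x by (auto simp: F_def split: split_indicator)
      then show ?thesis using False by auto
    qed
  qed
  show ?thesis unfolding f1_def[symmetric] f2_def[symmetric] using step1 step2 step3 step4 step5 by simp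
qed


lemma oct_normsq_scale: "oct_normsq (oct_scale c x) = c^2 * oct_normsq x"
  unfolding oct_normsq_def oct_scale_def by (simp add: sum_distrib_left power_mult_distrib)

lemma (in prob_space) indep_pair_compose:
  assumes ind: "indep_var S X T Y" and g1[measurable]: "g1 \<in> measurable S N1" and g2[measurable]: "g2 \<in> measurable T N2"
  shows "distr M N1 (\<lambda>\<omega>. g1 (X \<omega>)) \<Otimes>\<^sub>M distr M N2 (\<lambda>\<omega>. g2 (Y \<omega>)) = distr M (N1 \<Otimes>\<^sub>M N2) (\<lambda>\<omega>. (g1 (X \<omega>), g2 (Y \<omega>)))"
proof -
  have X[measurable]: "X \<in> measurable M S" and Y[measurable]: "Y \<in> measurable M T"
    and eq: "distr M S X \<Otimes>\<^sub>M distr M T Y = distr M (S \<Otimes>\<^sub>M T) (\<lambda>x. (X x, Y x))"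
    using ind unfolding indep_var_distribution_eq by auto
  have "distr M N1 (\<lambda>\<omega>. g1 (X \<omega>)) = distr (distr M S X) N1 g1"
    by (subst distr_distr) (auto simp: comp_def)
  moreover have "distr M N2 (\<lambda>\<omega>. g2 (Y \<omega>)) = distr (distr M T Y) N2 g2"
    by (subst distr_distr) (auto simp: comp_def)
  moreover have "distr (distr M S X) N1 g1 \<Otimes>\<^sub>M distr (distr M T Y) N2 g2
      = distr (distr M S X \<Otimes>\<^sub>M distr M T Y) (N1 \<Otimes>\<^sub>M N2) (\<lambda>(x, y). (g1 x, g2 y))"
  proof (rule pair_measure_distr)
    show "g1 \<in> measurable (distr M S X) N1" by simp
    show "g2 \<in> measurable (distr M T Y) N2" by simp
    show "sigma_finite_measure (distr (distr M T Y) N2 g2)"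
      by (rule prob_space_imp_sigma_finite, rule prob_space.prob_space_distr, rule prob_space_distr) auto
  qed
  moreover have "distr (distr M (S \<Otimes>\<^sub>M T) (\<lambda>x. (X x, Y x))) (N1 \<Otimes>\<^sub>M N2) (\<lambda>(x, y). (g1 x, g2 y))
      = distr M (N1 \<Otimes>\<^sub>M N2) (\<lambda>\<omega>. (g1 (X \<omega>), g2 (Y \<omega>)))"
    by (subst distr_distr) (auto simp: comp_def)
  ultimately show ?thesis using eq by simp
qed

theorem proposition5:
  fixes M :: "'w measure" and a :: real
    and t12 :: "'w \<Rightarrow> octo" and s1 s2 :: "'w \<Rightarrow> real"
  assumes "prob_space M"
    and "a > -1"
    and indep: "prob_space.indep_vars M (\<lambda>_. borel)
                  (\<lambda>i. if i < 8 then (\<lambda>\<omega>. t12 \<omega> i) else if i = 8 then s1 else s2)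
                  {..<(10::nat)}"
    and gauss: "\<And>i. i < 8 \<Longrightarrow> distributed M lborel (\<lambda>\<omega>. t12 \<omega> i) std_normal_density"
    and "distributed M lborel s1 (gamma_density (a + 1) 2)"
    and "distributed M lborel s2 (gamma_density (a + 5) 2)"
  defines "W11 \<equiv> \<lambda>\<omega>. (sqrt (s1 \<omega>))\<^sup>2"
    and "W12 \<equiv> \<lambda>\<omega>. oct_scale (sqrt (s1 \<omega>)) (t12 \<omega>)"
    and "W22 \<equiv> \<lambda>\<omega>. oct_normsq (t12 \<omega>) + (sqrt (s2 \<omega>))\<^sup>2"
  defines "lam1 \<equiv> \<lambda>\<omega>. eig_lo (W11 \<omega>) (W22 \<omega>) (oct_normsq (W12 \<omega>))"
    and "lam2 \<equiv> \<lambda>\<omega>. eig_hi (W11 \<omega>) (W22 \<omega>) (oct_normsq (W12 \<omega>))"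
  shows "\<exists>c>0. distributed M (lborel \<Otimes>\<^sub>M lborel) (\<lambda>\<omega>. (lam1 \<omega>, lam2 \<omega>))
           (\<lambda>(x, y). ennreal (if 0 < x \<and> x < y
              then c * (x * y) powr a * exp (- (x + y) / 2) * (y - x) ^ 8 else 0))"
proof -
  interpret P: prob_space M by fact
  note a = \<open>a > -1\<close>
  note D1 = \<open>distributed M lborel s1 (gamma_density (a + 1) 2)\<close>
  note D2 = \<open>distributed M lborel s2 (gamma_density (a + 5) 2)\<close>
  define X where "X = (\<lambda>i::nat. if i < 8 then (\<lambda>\<omega>. t12 \<omega> i) else if i = 8 then s1 else s2)"
  define r where "r \<omega> = (\<Sum>i<8. (t12 \<omega> i)^2)" for \<omega>
  have indX: "P.indep_vars (\<lambda>_. borel) X {..<10}" using indep unfolding X_def .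
  have isq: "P.indep_vars (\<lambda>_. borel) (\<lambda>i \<omega>. (t12 \<omega> i)^2) {..<8}"
  proof -
    have "P.indep_vars (\<lambda>_. borel) X {..<8}" by (rule P.indep_vars_subset[OF indX]) auto
    then have "P.indep_vars (\<lambda>_. borel) (\<lambda>i \<omega>. (X i \<omega>)^2) {..<8}"
      by (rule P.indep_vars_compose2) auto
    then show ?thesis by (rule P.indep_vars_cong[THEN iffD1, rotated -1]) (auto simp: X_def)
  qed
  have ne8: "{..<(8::nat)} \<noteq> {}" by (auto simp: lessThan_empty_iff)
  have "\<exists>C>0. distributed M lborel (\<lambda>\<omega>. \<Sum>i<8. (t12 \<omega> i)^2) (gdens C (\<Sum>i<(8::nat). 1/2))"
    by (rule P.gdens_sum[of "{..<8}" "\<lambda>i \<omega>. (t12 \<omega> i)^2" "\<lambda>_. 1/sqrt(2*pi)" "\<lambda>_. 1/2", OF _ ne8 _ _ _ isq])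
      (auto intro: sq_normal[OF \<open>prob_space M\<close> gauss])
  then obtain c3 where c3: "c3 > 0" and Dr0: "distributed M lborel (\<lambda>\<omega>. \<Sum>i<8. (t12 \<omega> i)^2) (gdens c3 (\<Sum>i<(8::nat). 1/2))"
    by blast
  have Dr: "distributed M lborel r (gdens c3 4)" using Dr0 unfolding r_def[abs_def] by simp
  have ind_s2r: "P.indep_var lborel s2 lborel r"
  proof -
    have "P.indep_var (PiM {9} (\<lambda>_. borel)) (\<lambda>\<omega>. restrict (\<lambda>i. X i \<omega>) {9}) (PiM {..<8} (\<lambda>_. borel)) (\<lambda>\<omega>. restrict (\<lambda>i. X i \<omega>) {..<8})"
      by (rule P.indep_var_restrict[OF indX]) auto
    then have "P.indep_var lborel ((\<lambda>f. f (9::nat)) \<circ> (\<lambda>\<omega>. restrict (\<lambda>i. X i \<omega>) {9})) lborel ((\<lambda>f. \<Sum>i<(8::nat). (f i)^2) \<circ> (\<lambda>\<omega>. restrict (\<lambda>i. X i \<omega>) {..<8}))"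
      by (rule P.indep_var_compose) auto
    also have "((\<lambda>f. f (9::nat)) \<circ> (\<lambda>\<omega>. restrict (\<lambda>i. X i \<omega>) {9})) = s2" by (auto simp: X_def)
    also have "((\<lambda>f. \<Sum>i<(8::nat). (f i)^2) \<circ> (\<lambda>\<omega>. restrict (\<lambda>i. X i \<omega>) {..<8})) = r"
      by (auto simp: X_def r_def fun_eq_iff intro!: sum.cong)
    finally show ?thesis .
  qed
  have ind_s1: "distr M lborel s1 \<Otimes>\<^sub>M distr M (lborel \<Otimes>\<^sub>M lborel) (\<lambda>\<omega>. (s2 \<omega>, r \<omega>)) = distr M (lborel \<Otimes>\<^sub>M (lborel \<Otimes>\<^sub>M lborel)) (\<lambda>\<omega>. (s1 \<omega>, (s2 \<omega>, r \<omega>)))"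
  proof -
    have "P.indep_var (PiM {8} (\<lambda>_. borel)) (\<lambda>\<omega>. restrict (\<lambda>i. X i \<omega>) {8}) (PiM (insert 9 {..<8}) (\<lambda>_. borel)) (\<lambda>\<omega>. restrict (\<lambda>i. X i \<omega>) (insert 9 {..<8}))"
      by (rule P.indep_var_restrict[OF indX]) auto
    then have E: "distr M lborel (\<lambda>\<omega>. (\<lambda>f. f (8::nat)) (restrict (\<lambda>i. X i \<omega>) {8})) \<Otimes>\<^sub>M distr M (lborel \<Otimes>\<^sub>M lborel) (\<lambda>\<omega>. (\<lambda>f. (f (9::nat), \<Sum>i<(8::nat). (f i)^2)) (restrict (\<lambda>i. X i \<omega>) (insert 9 {..<8})))
      = distr M (lborel \<Otimes>\<^sub>M (lborel \<Otimes>\<^sub>M lborel)) (\<lambda>\<omega>. ((\<lambda>f. f (8::nat)) (restrict (\<lambda>i. X i \<omega>) {8}), (\<lambda>f. (f (9::nat), \<Sum>i<(8::nat). (f i)^2)) (restrict (\<lambda>i. X i \<omega>) (insert 9 {..<8}))))"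
    proof (rule P.indep_pair_compose)
      show "(\<lambda>f. f (8::nat)) \<in> measurable (PiM {8} (\<lambda>_. borel)) lborel" by simp
      have m1: "(\<lambda>f. f (9::nat)) \<in> measurable (PiM (insert 9 {..<8}) (\<lambda>_. borel)) (borel :: real measure)"
        by (rule measurable_component_singleton) simp
      have m2: "(\<lambda>f. \<Sum>i<(8::nat). (f i)^2) \<in> measurable (PiM (insert 9 {..<8}) (\<lambda>_. borel)) (borel :: real measure)"
      proof (rule borel_measurable_sum)
        fix i :: nat assume "i \<in> {..<8}"
        then have "(\<lambda>f. f i) \<in> measurable (PiM (insert 9 {..<8}) (\<lambda>_. borel)) (borel :: real measure)"
          by (intro measurable_component_singleton) auto
        then show "(\<lambda>f. (f i)^2) \<in> measurable (PiM (insert 9 {..<8}) (\<lambda>_. borel)) (borel :: real measure)"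
          by measurable
      qed
      show "(\<lambda>f::nat\<Rightarrow>real. (f (9::nat), \<Sum>i<(8::nat). (f i)^2)) \<in> measurable (PiM (insert 9 {..<8}) (\<lambda>_. borel)) (lborel \<Otimes>\<^sub>M lborel)"
        by (rule measurable_Pair) (simp_all only: measurable_lborel1 m1 m2)
    qed
    have e1: "(\<lambda>\<omega>. (\<lambda>f. f (8::nat)) (restrict (\<lambda>i. X i \<omega>) {8})) = s1" by (auto simp: X_def)
    have e2: "(\<lambda>\<omega>. (\<lambda>f. (f (9::nat), \<Sum>i<(8::nat). (f i)^2)) (restrict (\<lambda>i. X i \<omega>) (insert 9 {..<8}))) = (\<lambda>\<omega>. (s2 \<omega>, r \<omega>))"
      by (auto simp: X_def r_def fun_eq_iff intro!: sum.cong)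
    have e3: "(\<lambda>\<omega>. ((\<lambda>f. f (8::nat)) (restrict (\<lambda>i. X i \<omega>) {8}), (\<lambda>f. (f (9::nat), \<Sum>i<(8::nat). (f i)^2)) (restrict (\<lambda>i. X i \<omega>) (insert 9 {..<8})))) = (\<lambda>\<omega>. (s1 \<omega>, (s2 \<omega>, r \<omega>)))"
      by (auto simp: X_def r_def fun_eq_iff intro!: sum.cong)
    show ?thesis using E unfolding e1 e2 e3 .
  qed
  have sfl: "sigma_finite_measure (lborel :: real measure)" by (rule lborel.sigma_finite_measure_axioms)
  have sfl2: "sigma_finite_measure (lborel \<Otimes>\<^sub>M lborel :: (real \<times> real) measure)" by (rule sigma_finite_pair_measure[OF sfl sfl])
  have D2r: "distributed M (lborel \<Otimes>\<^sub>M lborel) (\<lambda>\<omega>. (s2 \<omega>, r \<omega>)) (\<lambda>(y, r). ennreal (gamma_density (a + 5) 2 y) * ennreal (gdens c3 4 r))"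
    by (rule P.distributed_joint_indep[OF sfl sfl D2 Dr ind_s2r])
  have DZ: "distributed M (lborel \<Otimes>\<^sub>M (lborel \<Otimes>\<^sub>M lborel)) (\<lambda>\<omega>. (s1 \<omega>, (s2 \<omega>, r \<omega>)))
     (\<lambda>(x, yr). ennreal (gamma_density (a + 1) 2 x) * (case yr of (y, r) \<Rightarrow> ennreal (gamma_density (a + 5) 2 y) * ennreal (gdens c3 4 r)))"
    by (rule P.distributed_joint_indep'[OF sfl sfl2 D1 D2r ind_s1])
  define C where "C = c3 / (Gamma (a+1) * 2 powr (a+1) * (Gamma (a+5) * 2 powr (a+5)) * 140)"
  have Cpos: "C > 0" unfolding C_def using c3 a by (intro divide_pos_pos mult_pos_pos) auto
  define G where "G = (\<lambda>(x, y, r). (eig_lo ((sqrt x)^2) (r + (sqrt y)^2) ((sqrt x)^2 * r), eig_hi ((sqrt x)^2) (r + (sqrt y)^2) ((sqrt x)^2 * r)))"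
  define h where "h = (\<lambda>(x, y). ennreal (if 0 < x \<and> x < y then C * (x * y) powr a * exp (- (x + y) / 2) * (y - x) ^ 8 else 0))"
  have lam: "(\<lambda>\<omega>. (lam1 \<omega>, lam2 \<omega>)) = (\<lambda>\<omega>. G (s1 \<omega>, (s2 \<omega>, r \<omega>)))"
    unfolding lam1_def lam2_def W11_def W12_def W22_def oct_normsq_scale
    by (auto simp: fun_eq_iff G_def r_def oct_normsq_def)
  have Gm[measurable]: "G \<in> measurable (lborel \<Otimes>\<^sub>M (lborel \<Otimes>\<^sub>M lborel)) (lborel \<Otimes>\<^sub>M lborel)"
    unfolding G_def eig_lo_def eig_hi_def by measurable
  have Gm'[measurable]: "G \<in> measurable (borel \<Otimes>\<^sub>M (borel \<Otimes>\<^sub>M borel)) (borel \<Otimes>\<^sub>M borel)"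
    unfolding G_def eig_lo_def eig_hi_def by measurable
  have hm[measurable]: "h \<in> borel_measurable (lborel \<Otimes>\<^sub>M lborel)"
    unfolding h_def by measurable
  have "distributed M (lborel \<Otimes>\<^sub>M lborel) (\<lambda>\<omega>. G (s1 \<omega>, (s2 \<omega>, r \<omega>))) h"
  proof (rule distributed_via_integral[OF \<open>prob_space M\<close> DZ Gm hm])
    fix A assume A: "A \<in> sets (lborel \<Otimes>\<^sub>M lborel :: (real \<times> real) measure)"
    have A'[measurable]: "A \<in> sets (borel \<Otimes>\<^sub>M borel)" using A sets_pair_measure_cong[OF sets_lborel sets_lborel] by simp
    define dens where "dens = (\<lambda>(x, yr). ennreal (gamma_density (a + 1) 2 x) * (case yr of (y, r) \<Rightarrow> ennreal (gamma_density (a + 5) 2 y) * ennreal (gdens c3 4 r)))"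
    have densm[measurable]: "dens \<in> borel_measurable (lborel \<Otimes>\<^sub>M (lborel \<Otimes>\<^sub>M lborel))"
      unfolding dens_def by measurable
    have "(\<integral>\<^sup>+z. dens z * indicator A (G z) \<partial>(lborel \<Otimes>\<^sub>M (lborel \<Otimes>\<^sub>M lborel)))
        = (\<integral>\<^sup>+x. \<integral>\<^sup>+yr. dens (x, yr) * indicator A (G (x, yr)) \<partial>(lborel \<Otimes>\<^sub>M lborel) \<partial>lborel)"
      by (rule sigma_finite_measure.nn_integral_fst[OF sfl2, symmetric]) measurable
    also have "\<dots> = (\<integral>\<^sup>+x. \<integral>\<^sup>+y. \<integral>\<^sup>+r. dens (x, (y, r)) * indicator A (G (x, (y, r))) \<partial>lborel \<partial>lborel \<partial>lborel)"
    proof (rule nn_integral_cong)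
      fix x :: real
      show "(\<integral>\<^sup>+yr. dens (x, yr) * indicator A (G (x, yr)) \<partial>(lborel \<Otimes>\<^sub>M lborel)) = (\<integral>\<^sup>+y. \<integral>\<^sup>+r. dens (x, (y, r)) * indicator A (G (x, (y, r))) \<partial>lborel \<partial>lborel)"
        by (rule lborel.nn_integral_fst[where f="\<lambda>yr. dens (x, yr) * indicator A (G (x, yr))", symmetric]) measurable
    qed
    also have "\<dots> = (\<integral>\<^sup>+x. \<integral>\<^sup>+y. \<integral>\<^sup>+r. ennreal (gamma_density (a+1) 2 x * gamma_density (a+5) 2 y * (gdens c3 4 r *
            indicator A (eig_lo ((sqrt x)^2) (r + (sqrt y)^2) ((sqrt x)^2 * r), eig_hi ((sqrt x)^2) (r + (sqrt y)^2) ((sqrt x)^2 * r))))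
            \<partial>lborel \<partial>lborel \<partial>lborel)"
    proof (intro nn_integral_cong)
      fix x y r :: real
      have nn: "gamma_density (a+1) 2 x \<ge> 0" "gamma_density (a+5) 2 y \<ge> 0" "gdens c3 4 r \<ge> 0"
        using a c3 by (auto intro!: gamma_density_nonneg gdens_nonneg)
      show "dens (x, (y, r)) * indicator A (G (x, (y, r))) = ennreal (gamma_density (a+1) 2 x * gamma_density (a+5) 2 y * (gdens c3 4 r *
            indicator A (eig_lo ((sqrt x)^2) (r + (sqrt y)^2) ((sqrt x)^2 * r), eig_hi ((sqrt x)^2) (r + (sqrt y)^2) ((sqrt x)^2 * r))))"
        using nn by (simp add: dens_def G_def ennreal_mult mult.assoc split: split_indicator)
    qed
    also have "\<dots> = (\<integral>\<^sup>+l. \<integral>\<^sup>+t. ennreal ((if 0 < l \<and> l < t then C * (l*t) powr a * exp (-(l+t)/2) * (t-l)^8 else 0) * indicator A (l,t)) \<partial>lborel \<partial>lborel)"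
      unfolding C_def by (rule main_integral[OF a c3 A'])
    also have "\<dots> = (\<integral>\<^sup>+l. \<integral>\<^sup>+t. h (l, t) * indicator A (l, t) \<partial>lborel \<partial>lborel)"
    proof (intro nn_integral_cong)
      fix l t :: real
      have "(if 0 < l \<and> l < t then C * (l*t) powr a * exp (-(l+t)/2) * (t-l)^8 else 0) \<ge> 0"
        using Cpos by auto
      then show "ennreal ((if 0 < l \<and> l < t then C * (l*t) powr a * exp (-(l+t)/2) * (t-l)^8 else 0) * indicator A (l,t)) = h (l, t) * indicator A (l, t)"
        unfolding h_def by (simp add: ennreal_mult' add.commute split: split_indicator)
    qed
    also have "\<dots> = (\<integral>\<^sup>+w. h w * indicator A w \<partial>(lborel \<Otimes>\<^sub>M lborel))"
      by (rule lborel.nn_integral_fst[where f="\<lambda>w. h w * indicator A w"]) measurable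
    finally show "(\<integral>\<^sup>+z. dens z * indicator A (G z) \<partial>(lborel \<Otimes>\<^sub>M (lborel \<Otimes>\<^sub>M lborel))) = (\<integral>\<^sup>+w. h w * indicator A w \<partial>(lborel \<Otimes>\<^sub>M lborel))" .
  qed
  then show ?thesis using Cpos unfolding lam h_def by blast
qed


end
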